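(* Let $0<q<1/2$, $p=1-q$, $\lambda=q/p$, $c(x)=x-1-\log x$ for $x>0$, and for integers $z\ge1$ let $$P_{SN}(z)=1-\sum_{k=0}^{z-1}e^{-zq/p}\frac{(zq/p)^k}{k!}\left(1-\left(\frac qp\right)^{z-k}\right).$$ Then as $z\to+\infty$, $$P_{SN}(z)\sim\frac{e^{-zc(\lambda)}}{2}.$$
   Context: $P_{SN}(z)$ is Nakamoto's approximation of the probability of success of a double-spend attack by attackers with relative hash power $q$ after $z$ confirmations. Note $c(\lambda)>0$ for $\lambda\neq1$. *)

theory Defs
  imports "HOL-Analysis.Analysis" "HOL-Library.Landau_Symbols"
begin

definition c_fun :: "real \<Rightarrow> real" where
  "c_fun x = x - 1 - ln x"

definition P_SN :: "real \<Rightarrow> nat \<Rightarrow> real" where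
  "P_SN q z = 1 - (\<Sum>k<z. exp (- real z * q / (1 - q)) * (real z * q / (1 - q)) ^ k / fact k
                     * (1 - (q / (1 - q)) ^ (z - k)))"

end

theory Submission
  imports Defs "HOL-Probability.Probability"
begin



lemma std_normal_half:
  "cdf std_normal_distribution 0 = 1/2" and std_normal_cont: "isCont (cdf std_normal_distribution) 0"
proof -
  interpret N: real_distribution std_normal_distribution by (rule real_dist_normal_dist)
  let ?f = "\<lambda>x. ennreal (std_normal_density x)"
  have sym: "std_normal_density (-x) = std_normal_density x" for x
    by (simp add: std_normal_density_def)
  have e1: "emeasure std_normal_distribution {..0} = emeasure std_normal_distribution {0..}"
  proof -
    have "emeasure std_normal_distribution {..0} = (\<integral>\<^sup>+x. ?f x * indicator {..0} x \<partial>lborel)"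
      by (rule emeasure_density) auto
    also have "\<dots> = (\<integral>\<^sup>+x. ?f (0 + (-1) * x) * indicator {..0} (0 + (-1) * x) \<partial>lborel)"
      by (subst nn_integral_real_affine[of _ "-1" 0]) auto
    also have "\<dots> = (\<integral>\<^sup>+x. ?f x * indicator {0..} x \<partial>lborel)"
      by (intro nn_integral_cong) (auto simp: sym split: split_indicator)
    also have "\<dots> = emeasure std_normal_distribution {0..}"
      by (rule emeasure_density[symmetric]) auto
    finally show ?thesis .
  qed
  have z: "emeasure std_normal_distribution {0} = 0"
  proof -
    have "emeasure std_normal_distribution {0} = (\<integral>\<^sup>+x. ?f x * indicator {0} x \<partial>lborel)"
      by (rule emeasure_density) auto
    also have "\<dots> = 0"
      by (rule nn_integral_null_set[of "{0}", THEN trans]) (auto intro: nn_integral_cong simp: indicator_def)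
    finally show ?thesis .
  qed
  have m1: "measure std_normal_distribution {..0} = measure std_normal_distribution {0..}"
    using e1 by (simp add: measure_def)
  have m0: "measure std_normal_distribution {0} = 0"
    using z by (simp add: measure_def)
  have u: "N.prob ({..0} \<union> {0<..}) = N.prob {..0} + N.prob {0<..}"
    by (rule N.finite_measure_Union) auto
  have u2: "N.prob ({0} \<union> {0<..}) = N.prob {0} + N.prob {0<..}"
    by (rule N.finite_measure_Union) auto
  have "{..0} \<union> {0<..} = (UNIV::real set)" by auto
  then have "N.prob {..0} + N.prob {0<..} = 1" using u N.prob_space by simp
  moreover have "{0} \<union> {0<..} = {0::real..}" by auto
  ultimately have "N.prob {..0} = 1/2" using u2 m0 m1 by simp
  then show "cdf std_normal_distribution 0 = 1/2" by (simp add: cdf_def)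
  show "isCont (cdf std_normal_distribution) 0" using m0 N.isCont_cdf by simp
qed


lemma clt_half_aux:
  fixes M :: "(nat \<Rightarrow> real) measure" and E :: "real measure" and X :: "nat \<Rightarrow> (nat \<Rightarrow> real) \<Rightarrow> real"
  defines "E \<equiv> density lborel (exponential_density (1::real))"
  defines "M \<equiv> PiM (UNIV::nat set) (\<lambda>_. E)"
  defines "X \<equiv> (\<lambda>i \<omega>. \<omega> i)"
  shows "prob_space M" "\<And>i. distr M E (X i) = E" "prob_space.indep_vars M (\<lambda>_. borel) X UNIV"
    "\<And>i. distributed M lborel (X i) (exponential_density 1)"
proof -
  have pE: "prob_space E" unfolding E_def by (rule prob_space_exponential_density) simp
  show pM: "prob_space M" unfolding M_def by (rule prob_space_PiM) (rule pE)
  interpret prob_space M by (rule pM)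
  show dX: "distr M E (X i) = E" for i
    unfolding M_def X_def by (rule distr_PiM_component) (auto simp: pE)
  have sE: "sets E = sets borel" unfolding E_def by simp
  have mX: "X i \<in> measurable M E" for i
    unfolding M_def X_def by (rule measurable_component_singleton) simp
  have "indep_vars (\<lambda>_. E) X UNIV"
  proof (subst indep_vars_iff_distr_eq_PiM)
    show "distr M (Pi\<^sub>M UNIV (\<lambda>_. E)) (\<lambda>x. \<lambda>i\<in>UNIV. X i x) = Pi\<^sub>M UNIV (\<lambda>i. distr M E (X i))"
    proof -
      have eq: "(\<lambda>x. \<lambda>i\<in>UNIV. X i x) = (\<lambda>x. x)" by (auto simp: restrict_def X_def)
      show ?thesis unfolding dX eq M_def[symmetric] by (rule distr_id)
    qed
  qed (auto simp: mX)
  then show "indep_vars (\<lambda>_. borel) X UNIV"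
    unfolding indep_vars_def2 using sE measurable_cong_sets[OF refl sE, of M] by simp
  show "distributed M lborel (X i) (exponential_density 1)" for i
  proof -
    have "distr M lborel (X i) = distr M E (X i)"
      by (rule distr_cong) (auto simp: sE)
    then show ?thesis unfolding distributed_def using dX[of i] mX[of i] measurable_cong_sets[OF refl sE]
      by (simp add: E_def)
  qed
qed


lemma clt_half: "(\<lambda>n. exp (- real n) * (\<Sum>k<n. real n ^ k / fact k)) \<longlonglongrightarrow> 1/2"
proof -
  define E where "E = density lborel (exponential_density (1::real))"
  define M where "M = PiM (UNIV::nat set) (\<lambda>_. E)"
  define X where "X = (\<lambda>(i::nat) (\<omega>::nat\<Rightarrow>real). \<omega> i)"
  have aux: "prob_space M" "\<And>i. distr M E (X i) = E" "prob_space.indep_vars M (\<lambda>_. borel) X UNIV"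
    "\<And>i. distributed M lborel (X i) (exponential_density 1)"
    unfolding E_def M_def X_def by (rule clt_half_aux)+
  interpret prob_space M by (rule aux(1))
  have dist: "distributed M lborel (X i) (exponential_density 1)" for i by (rule aux(4))
  have sE: "sets E = sets borel" unfolding E_def by simp
  have dX: "distr M borel (X n) = E" for n
  proof -
    have "distr M borel (X n) = distr M E (X n)"
      by (rule distr_cong) (auto simp: sE)
    then show ?thesis using aux(2) by simp
  qed
  have clt: "weak_conv_m (\<lambda>n. distr M borel (\<lambda>x. (\<Sum>i<n. X i x - 1) / sqrt (real n * 1\<^sup>2))) std_normal_distribution"
  proof (rule central_limit_theorem[where \<mu>=E and m=1 and \<sigma>=1])
    show "indep_vars (\<lambda>i. borel) X UNIV" using aux(3) by simp
    show "expectation (X n) = 1" for n using exponential_distributed_expectation[OF _ dist, of n] by simp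
    show "integrable M (\<lambda>x. (X n x)\<^sup>2)" for n using erlang_ith_moment_integrable[OF _ dist, of n 2] by simp
    show "variance (X n) = 1\<^sup>2" for n using exponential_distributed_variance[OF _ dist, of n] by simp
    show "distr M borel (X n) = E" for n by (rule dX)
  qed simp
  then have lim: "(\<lambda>n. cdf (distr M borel (\<lambda>x. (\<Sum>i<n. X i x - 1) / sqrt (real n * 1\<^sup>2))) 0) \<longlonglongrightarrow> 1/2"
  proof -
    have "(\<lambda>n. cdf (distr M borel (\<lambda>x. (\<Sum>i<n. X i x - 1) / sqrt (real n * 1\<^sup>2))) 0) \<longlonglongrightarrow> cdf std_normal_distribution 0"
      using clt std_normal_cont unfolding weak_conv_m_def weak_conv_def by blast
    then show ?thesis by (simp only: std_normal_half)
  qed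
  have eq: "cdf (distr M borel (\<lambda>x. (\<Sum>i<n. X i x - 1) / sqrt (real n * 1\<^sup>2))) 0
      = 1 - exp (- real n) * (\<Sum>k<n. real n ^ k / fact k)" if n: "n \<ge> 1" for n
  proof -
    have mX[measurable]: "X i \<in> borel_measurable M" for i
      using dist[of i] by (auto simp: distributed_def)
    have "cdf (distr M borel (\<lambda>x. (\<Sum>i<n. X i x - 1) / sqrt (real n * 1\<^sup>2))) 0
        = prob {x \<in> space M. (\<Sum>i<n. X i x - 1) / sqrt (real n * 1\<^sup>2) \<le> 0}"
      by (subst cdf_def, subst measure_distr) (auto intro!: arg_cong[where f=prob])
    also have "\<dots> = prob {x \<in> space M. (\<Sum>i\<in>{..<n}. X i x) \<le> real n}"
      using n by (intro arg_cong[where f=prob]) (auto simp: sum_subtractf divide_le_0_iff)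
    also have "\<dots> = erlang_CDF (card {..<n} - 1) 1 (real n)"
      apply (rule erlang_distributed_le)
      apply (rule exponential_distributed_sum)
      using n dist aux(3) by (auto intro: indep_vars_subset simp: lessThan_empty_iff)
    also have "\<dots> = 1 - exp (- real n) * (\<Sum>k<n. real n ^ k / fact k)"
    proof -
      have "{..n - 1} = {..<n}" using n by auto
      then show ?thesis
        by (simp add: erlang_CDF_def sum_distrib_left mult.commute)
    qed
    finally show ?thesis .
  qed
  have "(\<lambda>n. 1 - cdf (distr M borel (\<lambda>x. (\<Sum>i<n. X i x - 1) / sqrt (real n * 1\<^sup>2))) 0) \<longlonglongrightarrow> 1 - 1/2"
    by (intro tendsto_intros lim)
  then have "(\<lambda>n. 1 - cdf (distr M borel (\<lambda>x. (\<Sum>i<n. X i x - 1) / sqrt (real n * 1\<^sup>2))) 0) \<longlonglongrightarrow> 1/2"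
    by simp
  then show ?thesis
    apply (rule Lim_transform_eventually)
    using eventually_ge_at_top[of 1] by eventually_elim (subst eq, simp_all)
qed


lemma exp_partial_le:
  fixes x :: real assumes "0 \<le> x" shows "(\<Sum>k<N. x ^ k / fact k) \<le> exp x"
proof -
  have s: "(\<lambda>k. x ^ k / fact k) sums exp x" using exp_converges[of x] by (simp add: divide_inverse mult.commute)
  show ?thesis using sum_le_suminf[OF sums_summable[OF s], of "{..<N}"] assms s sums_unique
    by (auto simp: sums_iff)
qed

lemma fact_pow_le: "fact N * N ^ j \<le> (fact (N + j) :: nat)"
proof (induction j)
  case (Suc j)
  have "fact N * N ^ Suc j = N * (fact N * N ^ j)" by simp
  also have "\<dots> \<le> (N + j + 1) * fact (N + j)" using Suc by (intro mult_mono) auto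
  also have "\<dots> = fact (N + Suc j)" by simp
  finally show ?case .
qed simp

lemma exp_tail_le:
  fixes a :: real and N :: nat
  assumes "0 \<le> a" "a < real N"
  shows "exp a - (\<Sum>k<N. a ^ k / fact k) \<le> a ^ N / fact N / (1 - a / N)"
proof -
  have s: "(\<lambda>k. a ^ k / fact k) sums exp a" using exp_converges[of a] by (simp add: divide_inverse mult.commute)
  have s1: "(\<lambda>j. a ^ (j + N) / fact (j + N)) sums (exp a - (\<Sum>k<N. a ^ k / fact k))"
    using sums_iff_shift[of "\<lambda>k. a ^ k / fact k" N] s by simp
  have N: "N > 0" using assms by (cases N) auto
  have r: "norm (a / N) < 1" using assms N by auto
  have s2: "(\<lambda>j. a ^ N / fact N * (a / N) ^ j) sums (a ^ N / fact N * (1 / (1 - a / N)))"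
    by (rule sums_mult[OF geometric_sums[OF r]])
  have le: "a ^ (j + N) / fact (j + N) \<le> a ^ N / fact N * (a / N) ^ j" for j
  proof -
    have f: "real (fact N * N ^ j) \<le> real (fact (N + j))" using fact_pow_le[of N j] by linarith
    have fp: "(0::real) < fact N * real N ^ j" using N by simp
    have "a ^ (j + N) / fact (j + N) = a ^ N * a ^ j / fact (N + j)" by (simp add: power_add add.commute)
    also have "\<dots> \<le> a ^ N * a ^ j / (fact N * real N ^ j)"
      using f fp assms by (intro divide_left_mono) (auto simp: of_nat_mult)
    also have "\<dots> = a ^ N / fact N * (a / N) ^ j" by (simp add: power_divide)
    finally show ?thesis .
  qed
  show ?thesis using sums_le[OF le s1 s2] by simp
qed

lemma prod_ge: "j \<le> n \<Longrightarrow> (\<Prod>i<j. 1 - real i / n) \<ge> 1 - real j ^ 2 / n \<and> (\<Prod>i<j. 1 - real i / n) \<le> 1 \<and> (\<Prod>i<j. 1 - real i / n) \<ge> 0"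
proof (induction j)
  case (Suc j)
  let ?P = "\<Prod>i<j. 1 - real i / n"
  have n: "n > 0" using Suc by auto
  have f: "0 \<le> 1 - real j / n" "1 - real j / n \<le> 1" using Suc n by (auto simp: field_simps)
  have IH: "?P \<ge> 1 - real j ^ 2 / n" "?P \<le> 1" "?P \<ge> 0" using Suc by auto
  have "?P * (1 - real j / n) \<ge> ?P - real j / n"
  proof -
    have "real j * ?P / n \<le> real j / n" using IH n by (intro divide_right_mono mult_left_le) auto
    then show ?thesis by (simp add: algebra_simps)
  qed
  moreover have "?P - real j / n \<ge> 1 - real (Suc j) ^ 2 / n"
  proof -
    have "real (Suc j) ^ 2 / n \<ge> real j ^ 2 / n + real j / n"
      using n by (auto simp: add_divide_distrib[symmetric] power2_eq_square algebra_simps intro!: divide_right_mono)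
    then show ?thesis using IH(1) by linarith
  qed
  moreover have "?P * (1 - real j / n) \<le> 1" using IH f by (simp add: mult_le_one)
  ultimately show ?case using IH f by auto
qed simp


lemma T_shift:
  fixes n :: nat assumes "j \<le> n"
  shows "real n ^ (n - j) / fact (n - j) = real n ^ n / fact n * (\<Prod>i<j. 1 - real i / n)"
  using assms
proof (induction j)
  case (Suc j)
  have n: "n > 0" using Suc by auto
  obtain k where k: "n - j = Suc k" using Suc by (metis Suc_diff_Suc Suc_le_lessD)
  have k2: "n - Suc j = k" using k by auto
  have "real n ^ (n - Suc j) / fact (n - Suc j) = real n ^ k / fact k" by (simp add: k2)
  also have "\<dots> = real n ^ Suc k / fact (Suc k) * ((Suc k) / n)"
  proof -
    have "real n ^ Suc k / fact (Suc k) * ((Suc k) / n) = (real n * real n ^ k) / (real (Suc k) * fact k) * (real (Suc k) / n)"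
      by (simp add: fact_Suc)
    also have "\<dots> = real n ^ k / fact k" using n by (simp add: divide_simps del: of_nat_Suc)
    finally show ?thesis by simp
  qed
  also have "real (Suc k) / n = 1 - real j / n"
    using k n Suc.prems by (simp add: field_simps of_nat_diff[symmetric])
  finally have A: "real n ^ (n - Suc j) / fact (n - Suc j) = real n ^ (n - j) / fact (n - j) * (1 - real j / n)"
    using k by simp
  have B: "real n ^ (n - j) / fact (n - j) = real n ^ n / fact n * (\<Prod>i<j. 1 - real i / n)" using Suc by simp
  show ?case by (simp only: A B prod.lessThan_Suc mult.assoc)
qed simp

lemma b_bound:
  fixes n m :: nat assumes "m \<le> n" "4 * real m ^ 2 \<le> real n" "n > 0"
  shows "real n ^ n / fact n * exp (- real n) \<le> 4 / (3 * (real m + 1))"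
proof -
  let ?T = "\<lambda>k. real n ^ k / fact k"
  have lo: "?T (n - j) \<ge> ?T n * (3/4)" if "j \<le> m" for j
  proof -
    have p: "(\<Prod>i<j. 1 - real i / n) \<ge> 1 - real j ^ 2 / n" using prod_ge[of j n] that assms by auto
    have "real j ^ 2 \<le> real m ^ 2" using that by (simp add: power_mono)
    then have "4 * real j ^ 2 \<le> real n" using assms(2) by linarith
    then have "real j ^ 2 / n \<le> 1/4" using assms(3) by (simp add: field_simps)
    then have "(\<Prod>i<j. 1 - real i / n) \<ge> 3/4" using p by linarith
    then have "?T n * (3/4) \<le> ?T n * (\<Prod>i<j. 1 - real i / n)" by (intro mult_left_mono) auto
    then show ?thesis using T_shift[of j n] that assms by simp
  qed
  have "(real m + 1) * (?T n * (3/4)) = (\<Sum>j\<le>m. ?T n * (3/4))" by simp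
  also have "\<dots> \<le> (\<Sum>j\<le>m. ?T (n - j))" by (rule sum_mono) (rule lo, simp)
  also have "\<dots> = (\<Sum>k\<in>(\<lambda>j. n - j) ` {..m}. ?T k)"
    using assms by (subst sum.reindex) (auto simp: inj_on_def)
  also have "\<dots> \<le> (\<Sum>k<Suc n. ?T k)"
    by (rule sum_mono2) auto
  also have "\<dots> \<le> exp (real n)" by (rule exp_partial_le) simp
  finally have "(real m + 1) * (?T n * (3/4)) \<le> exp (real n)" .
  then have "?T n * exp (- real n) * ((real m + 1) * (3/4)) \<le> 1"
    by (simp add: exp_minus field_simps)
  then show ?thesis by (simp add: field_simps)
qed

lemma b_lim: "(\<lambda>n. real n ^ n / fact n * exp (- real n)) \<longlonglongrightarrow> 0"
proof (rule tendsto_sandwich[where f="\<lambda>_. 0" and h="\<lambda>n. 8 / (3 * sqrt (real n))"])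
  show "\<forall>\<^sub>F n in sequentially. 0 \<le> real n ^ n / fact n * exp (- real n)" by simp
  show "\<forall>\<^sub>F n in sequentially. real n ^ n / fact n * exp (- real n) \<le> 8 / (3 * sqrt (real n))"
    using eventually_gt_at_top[of 0]
  proof eventually_elim
    case (elim n)
    define m where "m = nat \<lfloor>sqrt (real n) / 2\<rfloor>"
    have s0: "0 \<le> sqrt (real n) / 2" by simp
    have m1: "real m \<le> sqrt (real n) / 2" unfolding m_def using s0 by linarith
    have m2: "sqrt (real n) / 2 < real m + 1" unfolding m_def using s0 by linarith
    have "4 * real m ^ 2 \<le> 4 * (sqrt (real n) / 2) ^ 2" using m1 by (intro mult_left_mono power_mono) auto
    also have "\<dots> = real n" by (simp add: power_divide)
    finally have h2: "4 * real m ^ 2 \<le> real n" .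
    have "real m \<le> real (m * m)" using le_square[of m] by linarith
    then have "real m \<le> real m ^ 2" by (simp add: power2_eq_square)
    then have "real m \<le> real n" using h2 by linarith
    then have h1: "m \<le> n" by simp
    have "real n ^ n / fact n * exp (- real n) \<le> 4 / (3 * (real m + 1))" by (rule b_bound[OF h1 h2 elim])
    also have "\<dots> \<le> 4 / (3 * (sqrt (real n) / 2))" using m2 elim by (intro divide_left_mono) auto
    also have "\<dots> = 8 / (3 * sqrt (real n))" by simp
    finally show ?case .
  qed
  show "(\<lambda>n. 8 / (3 * sqrt (real n))) \<longlonglongrightarrow> 0" by (intro tendsto_divide_0[OF tendsto_const] filterlim_at_top_imp_at_infinity filterlim_tendsto_pos_mult_at_top[OF tendsto_const] sqrt_at_top[THEN filterlim_compose] filterlim_real_sequentially) auto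
qed simp

lemma main_split:
  fixes q :: real and z :: nat
  assumes "0 < q" "q < 1/2" "z > 0"
  defines "l \<equiv> q / (1 - q)"
  defines "E \<equiv> exp (- real z * c_fun l)"
  shows "P_SN q z / (E / 2) = 2 * ((1 - exp (- (real z * l)) * (\<Sum>k<z. (real z * l) ^ k / fact k)) / E)
     + 2 * (exp (- real z) * (\<Sum>k<z. real z ^ k / fact k))"
    and "0 \<le> (1 - exp (- (real z * l)) * (\<Sum>k<z. (real z * l) ^ k / fact k)) / E"
    and "(1 - exp (- (real z * l)) * (\<Sum>k<z. (real z * l) ^ k / fact k)) / E
         \<le> real z ^ z / fact z * exp (- real z) / (1 - l)"
proof -
  have q1: "1 - q > 0" using assms by simp
  have l0: "0 < l" and l1: "l < 1" using assms q1 by (auto simp: l_def field_simps)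
  let ?a = "real z * l"
  let ?Sa = "\<Sum>k<z. ?a ^ k / fact k"
  let ?Sz = "\<Sum>k<z. real z ^ k / fact k"
  let ?T1 = "1 - exp (- ?a) * ?Sa"
  have "l ^ z = exp (real z * ln l)" using l0 by (simp add: exp_of_nat_mult exp_ln)
  then have Eeq: "E = exp (- ?a) * exp (real z) * l ^ z"
    by (simp add: E_def c_fun_def algebra_simps exp_add exp_diff exp_minus divide_inverse)
  have Epos: "E > 0" unfolding E_def by simp
  have a_eq: "real z * q / (1 - q) = ?a" by (simp add: l_def)
  have trm: "exp (- ?a) * ?a ^ k / fact k * (1 - l ^ (z - k)) =
      exp (- ?a) * (?a ^ k / fact k) - exp (- ?a) * l ^ z * (real z ^ k / fact k)" if "k < z" for k
  proof -
    have lz: "l ^ k * l ^ (z - k) = l ^ z" using that by (simp add: power_add[symmetric])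
    have e1: "?a ^ k * l ^ (z - k) = real z ^ k * l ^ z"
      by (simp add: power_mult_distrib mult.assoc lz)
    have "exp (- ?a) * ?a ^ k / fact k * (1 - l ^ (z - k)) =
       exp (- ?a) * (?a ^ k / fact k) - exp (- ?a) * (?a ^ k * l ^ (z - k)) / fact k"
      by (simp add: field_simps)
    also have "\<dots> = exp (- ?a) * (?a ^ k / fact k) - exp (- ?a) * l ^ z * (real z ^ k / fact k)"
      by (simp only: e1) (simp add: algebra_simps)
    finally show ?thesis .
  qed
  have P: "P_SN q z = ?T1 + exp (- ?a) * l ^ z * ?Sz"
  proof -
    have "P_SN q z = 1 - (\<Sum>k<z. exp (- ?a) * ?a ^ k / fact k * (1 - l ^ (z - k)))"
      unfolding P_SN_def a_eq[symmetric] l_def by (simp add: a_eq)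
    also have "(\<Sum>k<z. exp (- ?a) * ?a ^ k / fact k * (1 - l ^ (z - k))) =
        (\<Sum>k<z. exp (- ?a) * (?a ^ k / fact k) - exp (- ?a) * l ^ z * (real z ^ k / fact k))"
      by (intro sum.cong refl trm) simp
    also have "\<dots> = exp (- ?a) * ?Sa - exp (- ?a) * l ^ z * ?Sz"
      by (simp add: sum_subtractf sum_distrib_left)
    finally show ?thesis by simp
  qed
  show "P_SN q z / (E / 2) = 2 * (?T1 / E) + 2 * (exp (- real z) * ?Sz)"
  proof -
    have gen: "\<And>T e x L S::real. e > 0 \<Longrightarrow> x > 0 \<Longrightarrow> L > 0 \<Longrightarrow>
       (T + e*L*S)/((e*x*L)/2) = 2*(T/(e*x*L)) + 2*(inverse x * S)" by (simp add: field_simps)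
    show ?thesis unfolding P Eeq exp_minus[of "real z"] by (rule gen) (auto simp: l0)
  qed
  have a0: "0 \<le> ?a" using l0 by simp
  have Sa: "?Sa \<le> exp ?a" by (rule exp_partial_le[OF a0])
  have "0 \<le> ?T1" using Sa by (simp add: exp_minus field_simps)
  then show "0 \<le> ?T1 / E" using Epos by simp
  have alt: "?a < real z" using l1 assms(3) by simp
  have tail: "exp ?a - ?Sa \<le> ?a ^ z / fact z / (1 - ?a / z)" by (rule exp_tail_le[OF a0 alt])
  have "?T1 = exp (- ?a) * (exp ?a - ?Sa)" by (simp add: algebra_simps exp_minus)
  also have "\<dots> \<le> exp (- ?a) * (?a ^ z / fact z / (1 - ?a / z))"
    by (rule mult_left_mono[OF tail]) simp
  also have "\<dots> = E * (real z ^ z / fact z * exp (- real z) / (1 - l))"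
    using assms(3) l1 by (simp add: Eeq power_mult_distrib exp_minus field_simps)
  finally show "?T1 / E \<le> real z ^ z / fact z * exp (- real z) / (1 - l)"
    using Epos by (simp add: field_simps)
qed

theorem mainTheorem8:
  fixes q :: real
  assumes "0 < q" and "q < 1/2"
  shows "(\<lambda>z::nat. P_SN q z) \<sim>[at_top] (\<lambda>z. exp (- real z * c_fun (q / (1 - q))) / 2)"
proof (rule asymp_equivI')
  define l where "l = q / (1 - q)"
  have q1: "1 - q > 0" using assms by simp
  have l1: "l < 1" using assms q1 by (auto simp: l_def field_simps)
  define T where "T = (\<lambda>z::nat. (1 - exp (- (real z * l)) * (\<Sum>k<z. (real z * l) ^ k / fact k)) / exp (- real z * c_fun l))"
  have Tlim: "T \<longlonglongrightarrow> 0"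
  proof (rule tendsto_sandwich[where f="\<lambda>_. 0" and h="\<lambda>z. real z ^ z / fact z * exp (- real z) / (1 - l)"])
    show "\<forall>\<^sub>F n in sequentially. 0 \<le> T n"
      using eventually_gt_at_top[of 0] by eventually_elim (unfold T_def l_def, rule main_split(2)[OF assms])
    show "\<forall>\<^sub>F n in sequentially. T n \<le> real n ^ n / fact n * exp (- real n) / (1 - l)"
      using eventually_gt_at_top[of 0] by eventually_elim (unfold T_def l_def, rule main_split(3)[OF assms])
    have "(\<lambda>z. real z ^ z / fact z * exp (- real z) / (1 - l)) \<longlonglongrightarrow> 0 / (1 - l)"
      by (intro tendsto_divide b_lim tendsto_const) (use l1 in simp)
    then show "(\<lambda>z. real z ^ z / fact z * exp (- real z) / (1 - l)) \<longlonglongrightarrow> 0" by simp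
  qed simp
  have "(\<lambda>z. 2 * T z + 2 * (exp (- real z) * (\<Sum>k<z. real z ^ k / fact k))) \<longlonglongrightarrow> 2 * 0 + 2 * (1/2)"
    by (intro tendsto_intros Tlim clt_half)
  then have lim: "(\<lambda>z. 2 * T z + 2 * (exp (- real z) * (\<Sum>k<z. real z ^ k / fact k))) \<longlonglongrightarrow> 1" by simp
  show "(\<lambda>z. P_SN q z / (exp (- real z * c_fun (q / (1 - q))) / 2)) \<longlonglongrightarrow> 1"
    using lim
  proof (rule Lim_transform_eventually)
    show "\<forall>\<^sub>F z in sequentially. 2 * T z + 2 * (exp (- real z) * (\<Sum>k<z. real z ^ k / fact k)) =
        P_SN q z / (exp (- real z * c_fun (q / (1 - q))) / 2)"
      using eventually_gt_at_top[of 0] by eventually_elim (unfold T_def l_def, rule main_split(1)[OF assms, symmetric])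
  qed
qed
end
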